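(* Let $k\ge2$ be an integer and $\mathbb{F}$ a finite field. There is a black-box transformation with parameters $(t=1,k,k_0=2,\ell=k-1,\mathbb{F})$ and rate $1-1/k$, in which $c_j=k-1$ for every $j\in[k]$.
   Context: A $k$-party $\ell$-LMSSS over $\mathbb{F}$: an $\mathbb{F}$-linear map $\mathsf{Share}:\mathbb{F}^\ell\times\mathbb{F}^e\to\mathbb{F}^{b_1}\times\dots\times\mathbb{F}^{b_k}$ together with an access structure (sets that can linearly recover the secret) and adversary structure (sets whose shares, under uniform randomness, are distributed independently of the secret); information rate $\ell/\sum_jb_j$. Black-box transformation with parameters $(t,k,k_0,\ell,\mathbb{F})$: a $k$-party $\ell$-LMSSS $\mathcal{L}=(\mathsf{Share}_\mathcal{L},\mathsf{Rec}_\mathcal{L})$ over $\mathbb{F}$ with parameters $(e,b_1,\dots,b_k)$ (all $k$ parties together qualified), replication functions $\psi_i:[k_0]\to2^{[k]}$ ($i\in[\ell]$) and conversion functions $\varphi_j:\mathbb{F}^{c_j}\to\mathbb{F}^{b_j}$, $c_j=\sum_{i=1}^\ell|\{v\in[k_0]:j\in\psi_i(v)\}|$, such that for every $(y_i^{(v)})_{i\in[\ell],v\in[k_0]}$ there is $\mathbf{r}$ with $(\varphi_j(\mathbf{Y}(j)))_{j}=\mathsf{Share}_\mathcal{L}((\sum_vy_1^{(v)},\dots,\sum_vy_\ell^{(v)}),\mathbf{r})$, where $\mathbf{Y}(j)=(y_i^{(v)})_{i,v:\,j\in\psi_i(v)}$; and for every $T\subseteq[k]$ with $|T|\le t$ and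 every $i$, $|\bigcup_{j\in T}\{v:j\in\psi_i(v)\}|\le k_0-1$. Its rate is the information rate of $\mathcal{L}$. *)

theory Defs
  imports Complex_Main
begin

text \<open>Conventions: all indices are 0-based. A vector in F^n is a function nat => 'f of
which only the entries < n matter. Party j ranges over j < k, share coordinate a < b j,
secret coordinate x < l, randomness coordinate c < e.\<close>

definition lin_share ::
  "nat \<Rightarrow> nat \<Rightarrow> (nat \<Rightarrow> nat \<Rightarrow> nat \<Rightarrow> 'f) \<Rightarrow> (nat \<Rightarrow> nat \<Rightarrow> nat \<Rightarrow> 'f)
   \<Rightarrow> (nat \<Rightarrow> 'f) \<Rightarrow> (nat \<Rightarrow> 'f) \<Rightarrow> nat \<Rightarrow> nat \<Rightarrow> 'f::field" where
  "lin_share l e A B s r j a = (\<Sum>x<l. A j a x * s x) + (\<Sum>c<e. B j a c * r c)"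

definition is_linear_share ::
  "nat \<Rightarrow> nat \<Rightarrow> ((nat \<Rightarrow> 'f) \<Rightarrow> (nat \<Rightarrow> 'f) \<Rightarrow> nat \<Rightarrow> nat \<Rightarrow> 'f::field) \<Rightarrow> bool" where
  "is_linear_share l e Sh \<longleftrightarrow> (\<exists>A B. Sh = lin_share l e A B)"

definition lin_recovers ::
  "nat \<Rightarrow> (nat \<Rightarrow> nat) \<Rightarrow> ((nat \<Rightarrow> 'f) \<Rightarrow> (nat \<Rightarrow> 'f) \<Rightarrow> nat \<Rightarrow> nat \<Rightarrow> 'f::field)
   \<Rightarrow> nat set \<Rightarrow> bool" where
  "lin_recovers l b Sh T \<longleftrightarrow>
     (\<exists>R. \<forall>s r. \<forall>x<l. s x = (\<Sum>j\<in>T. \<Sum>a<b j. R x j a * Sh s r j a))"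

definition info_rate :: "nat \<Rightarrow> nat \<Rightarrow> (nat \<Rightarrow> nat) \<Rightarrow> real" where
  "info_rate l k b = real l / real (\<Sum>j<k. b j)"

text \<open>Index set {(i,v) : i < l, v < k0, j \<in> psi_i(v)}; its cardinality is c_j.\<close>
definition repl_idx :: "(nat \<Rightarrow> nat \<Rightarrow> nat set) \<Rightarrow> nat \<Rightarrow> nat \<Rightarrow> nat \<Rightarrow> (nat \<times> nat) set" where
  "repl_idx psi l k0 j = {(i, v). i < l \<and> v < k0 \<and> j \<in> psi i v}"

text \<open>Black-box transformation with parameters (t,k,k0,l,F): LMSSS Share with
randomness dimension e and share sizes b, replication functions psi i : [k0] -> 2^[k],
conversion functions phi j : F^{c_j} -> F^{b_j}, the latter represented as functions
of the whole array y that depend only on the entries y i v with (i,v) in repl_idx (= Y(j)).\<close>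
definition black_box_transformation ::
  "nat \<Rightarrow> nat \<Rightarrow> nat \<Rightarrow> nat \<Rightarrow> nat \<Rightarrow> (nat \<Rightarrow> nat)
   \<Rightarrow> ((nat \<Rightarrow> 'f) \<Rightarrow> (nat \<Rightarrow> 'f) \<Rightarrow> nat \<Rightarrow> nat \<Rightarrow> 'f::field)
   \<Rightarrow> (nat \<Rightarrow> nat \<Rightarrow> nat set) \<Rightarrow> (nat \<Rightarrow> (nat \<Rightarrow> nat \<Rightarrow> 'f) \<Rightarrow> nat \<Rightarrow> 'f) \<Rightarrow> bool" where
  "black_box_transformation t k k0 l e b Sh psi phi \<longleftrightarrow>
     is_linear_share l e Sh \<and>
     lin_recovers l b Sh {..<k} \<and>
     (\<forall>i<l. \<forall>v<k0. psi i v \<subseteq> {..<k}) \<and>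
     (\<forall>j<k. \<forall>y y'. (\<forall>(i, v)\<in>repl_idx psi l k0 j. y i v = y' i v) \<longrightarrow>
                     (\<forall>a<b j. phi j y a = phi j y' a)) \<and>
     (\<forall>y. \<exists>r. \<forall>j<k. \<forall>a<b j. phi j y a = Sh (\<lambda>i. \<Sum>v<k0. y i v) r j a) \<and>
     (\<forall>T. T \<subseteq> {..<k} \<and> card T \<le> t \<longrightarrow>
        (\<forall>i<l. card (\<Union>j\<in>T. {v. v < k0 \<and> j \<in> psi i v}) \<le> k0 - 1))"

end

theory Submission
  imports Defs
begin

theorem mainTheorem13:
  fixes k :: nat
  assumes "k \<ge> 2"
  shows "\<exists>e b (Sh :: (nat \<Rightarrow> 'f::{finite,field}) \<Rightarrow> (nat \<Rightarrow> 'f) \<Rightarrow> nat \<Rightarrow> nat \<Rightarrow> 'f) psi phi.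
           black_box_transformation 1 k 2 (k - 1) e b Sh psi phi \<and>
           info_rate (k - 1) k b = 1 - 1 / real k \<and>
           (\<forall>j<k. card (repl_idx psi (k - 1) 2 j) = k - 1)"
proof -
  define l where "l = k - 1"
  define A :: "nat \<Rightarrow> nat \<Rightarrow> nat \<Rightarrow> 'f" where "A = (\<lambda>j a x. if j = x then 1 else 0)"
  define B :: "nat \<Rightarrow> nat \<Rightarrow> nat \<Rightarrow> 'f" where "B = (\<lambda>j a c. 1)"
  define Sh :: "(nat \<Rightarrow> 'f) \<Rightarrow> (nat \<Rightarrow> 'f) \<Rightarrow> nat \<Rightarrow> nat \<Rightarrow> 'f" where "Sh = lin_share l 1 A B"
  have Sh_eq: "Sh s r j a = (if j < l then s j else 0) + r 0" for s r j a
  proof -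
    have "(\<Sum>x<l. A j a x * s x) = (if j < l then s j else 0)"
      unfolding A_def by (simp add: sum.delta if_distrib[of "\<lambda>c. c * s _"] cong: if_cong)
    thus ?thesis unfolding Sh_def lin_share_def B_def by simp
  qed
  define b :: "nat \<Rightarrow> nat" where "b = (\<lambda>j. 1)"
  define psi :: "nat \<Rightarrow> nat \<Rightarrow> nat set" where
    "psi = (\<lambda>i v. if v = 0 then {i} else {..<k} - {i})"
  define phi :: "nat \<Rightarrow> (nat \<Rightarrow> nat \<Rightarrow> 'f) \<Rightarrow> nat \<Rightarrow> 'f" where
    "phi = (\<lambda>j y a. if j < l then y j 0 - (\<Sum>i\<in>{..<l}-{j}. y i 1) else - (\<Sum>i<l. y i 1))"
  have kl: "k = Suc l" "l \<ge> 1" using assms unfolding l_def by auto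
  have lin: "is_linear_share l 1 Sh" unfolding is_linear_share_def Sh_def by blast
  have rec: "lin_recovers l b Sh {..<k}"
    unfolding lin_recovers_def
  proof (intro exI allI impI)
    fix s r x assume x: "x < l"
    define R :: "nat \<Rightarrow> nat \<Rightarrow> nat \<Rightarrow> 'f" where
      "R = (\<lambda>x j a. if j = x then 1 else if j = l then -1 else 0)"
    have "(\<Sum>j<k. \<Sum>a<b j. R x j a * Sh s r j a) = (\<Sum>j<k. R x j 0 * Sh s r j 0)"
      unfolding b_def by simp
    also have "\<dots> = (\<Sum>j<k. (if j = x then Sh s r j 0 else 0) + (if j = l then - Sh s r j 0 else 0))"
      unfolding R_def using x by (intro sum.cong) auto
    also have "\<dots> = Sh s r x 0 - Sh s r l 0"
      using x kl by (simp add: sum.distrib sum.delta)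
    also have "\<dots> = s x" using x by (simp add: Sh_eq)
    finally show "s x = (\<Sum>j<k. \<Sum>a<b j. R x j a * Sh s r j a)" by simp
  qed
  have ri: "repl_idx psi l 2 j =
      (if j < l then insert (j,0) ((\<lambda>i. (i,1)) ` ({..<l}-{j})) else (\<lambda>i. (i,1)) ` {..<l})"
    if "j < k" for j
    using that kl unfolding repl_idx_def psi_def
    by (auto simp: less_2_cases_iff image_iff)
  have dep: "\<forall>j<k. \<forall>y y'. (\<forall>(i, v)\<in>repl_idx psi l 2 j. y i v = y' i v) \<longrightarrow>
                     (\<forall>a<b j. phi j y a = phi j y' a)"
  proof (intro allI impI)
    fix j and y y' :: "nat \<Rightarrow> nat \<Rightarrow> 'f" and a assume j: "j < k" and h: "\<forall>(i, v)\<in>repl_idx psi l 2 j. y i v = y' i v"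
    show "phi j y a = phi j y' a"
    proof (cases "j < l")
      case True
      with h ri[OF j] have "y j 0 = y' j 0" "\<forall>i\<in>{..<l}-{j}. y i 1 = y' i 1" by auto
      thus ?thesis using True unfolding phi_def by (auto intro!: sum.cong)
    next
      case False
      with h ri[OF j] have "\<forall>i\<in>{..<l}. y i 1 = y' i 1" by auto
      thus ?thesis using False unfolding phi_def by (auto intro!: sum.cong)
    qed
  qed
  have corr: "\<forall>y. \<exists>r. \<forall>j<k. \<forall>a<b j. phi j y a = Sh (\<lambda>i. \<Sum>v<2. y i v) r j a"
  proof (intro allI exI[of _ "\<lambda>_. - (\<Sum>i<l. y i 1)" for y] impI)
    fix j a and y :: "nat \<Rightarrow> nat \<Rightarrow> 'f" assume j: "j < k" and a: "a < b j"
    show "phi j y a = Sh (\<lambda>i. \<Sum>v<2. y i v) (\<lambda>_. - (\<Sum>i<l. y i 1)) j a"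
    proof (cases "j < l")
      case True
      have "(\<Sum>i<l. y i 1) = y j 1 + (\<Sum>i\<in>{..<l}-{j}. y i 1)"
        using True by (simp add: sum.remove)
      thus ?thesis using True unfolding phi_def Sh_eq by (simp add: numeral_2_eq_2)
    next
      case False thus ?thesis unfolding phi_def Sh_eq by simp
    qed
  qed
  have crd: "\<forall>T. T \<subseteq> {..<k} \<and> card T \<le> 1 \<longrightarrow>
        (\<forall>i<l. card (\<Union>j\<in>T. {v. v < 2 \<and> j \<in> psi i v}) \<le> 2 - 1)"
  proof (intro allI impI)
    fix T i assume T: "T \<subseteq> {..<k} \<and> card T \<le> 1" and i: "i < l"
    have fT: "finite T" using T finite_subset by blast
    have TT: "\<forall>a\<in>T. \<forall>c\<in>T. a = c" using T fT card_le_Suc0_iff_eq[OF fT] by simp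
    have fin: "finite (\<Union>j\<in>T. {v. v < 2 \<and> j \<in> psi i v})" using fT by auto
    have "\<forall>v1\<in>(\<Union>j\<in>T. {v. v < 2 \<and> j \<in> psi i v}). \<forall>v2\<in>(\<Union>j\<in>T. {v. v < 2 \<and> j \<in> psi i v}). v1 = v2"
    proof (intro ballI)
      fix v1 v2 assume "v1 \<in> (\<Union>j\<in>T. {v. v < 2 \<and> j \<in> psi i v})" "v2 \<in> (\<Union>j\<in>T. {v. v < 2 \<and> j \<in> psi i v})"
      then obtain j1 j2 where "j1 \<in> T" "j2 \<in> T" "v1 < 2" "j1 \<in> psi i v1" "v2 < 2" "j2 \<in> psi i v2" by auto
      thus "v1 = v2" using TT unfolding psi_def by (auto simp: less_2_cases_iff split: if_splits)
    qed
    thus "card (\<Union>j\<in>T. {v. v < 2 \<and> j \<in> psi i v}) \<le> 2 - 1"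
      using card_le_Suc0_iff_eq[OF fin] by simp
  qed
  have sub: "\<forall>i<l. \<forall>v<2. psi i v \<subseteq> {..<k}" unfolding psi_def using kl by auto
  have rate: "info_rate l k b = 1 - 1 / real k"
    unfolding info_rate_def b_def using kl by (simp add: field_simps)
  have cards: "\<forall>j<k. card (repl_idx psi l 2 j) = l"
  proof (intro allI impI)
    fix j assume j: "j < k"
    have inj: "inj (\<lambda>i::nat. (i, 1::nat))" by (auto simp: inj_on_def)
    show "card (repl_idx psi l 2 j) = l"
    proof (cases "j < l")
      case True
      have "card ((\<lambda>i. (i,1::nat)) ` ({..<l}-{j})) = l - 1"
        using True by (subst card_image) (auto simp: inj_on_def)
      moreover have "(j,0) \<notin> (\<lambda>i. (i,1::nat)) ` ({..<l}-{j})" by auto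
      ultimately show ?thesis using ri[OF j] True kl by simp
    next
      case False
      thus ?thesis using ri[OF j] by (simp, subst card_image) (auto simp: inj_on_def)
    qed
  qed
  show ?thesis
    apply (rule exI[of _ 1], rule exI[of _ b], rule exI[of _ Sh], rule exI[of _ psi], rule exI[of _ phi])
    unfolding black_box_transformation_def l_def[symmetric]
    using lin rec sub dep corr crd rate cards by simp
qed

end
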